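(* Let $n,k$ be integers with $2\le k\le n$. Every $A\in\mathcal{S}^{n,k}$ has at most $n-k$ negative eigenvalues (counted with multiplicity).
   Context: For integers $2\le k\le n$, the $k$-PSD closure $\mathcal{S}^{n,k}$ is the set of all $n\times n$ real symmetric matrices all of whose $k\times k$ principal submatrices are positive semidefinite. *)

theory Defs
  imports "Jordan_Normal_Form.Char_Poly" "Jordan_Normal_Form.DL_Submatrix"
begin

definition psd :: "real mat \<Rightarrow> bool" where
  "psd B \<longleftrightarrow> (\<exists>m. B \<in> carrier_mat m m) \<and> transpose_mat B = B \<and>
     (\<forall>v \<in> carrier_vec (dim_row B). v \<bullet> (B *\<^sub>v v) \<ge> 0)"

definition k_psd_closure :: "nat \<Rightarrow> nat \<Rightarrow> real mat set" where
  "k_psd_closure n k = {A. A \<in> carrier_mat n n \<and> transpose_mat A = A \<and>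
     (\<forall>I. I \<subseteq> {..<n} \<and> card I = k \<longrightarrow> psd (submatrix A I I))}"

definition num_neg_eigenvalues :: "real mat \<Rightarrow> nat" where
  "num_neg_eigenvalues A =
     (\<Sum>a\<in>{a::real. a < 0 \<and> poly (char_poly A) a = 0}. order a (char_poly A))"

end

theory Submission imports Defs "Jordan_Normal_Form.Schur_Decomposition" "Jordan_Normal_Form.Matrix_Kernel" "HOL-Computational_Algebra.Fundamental_Theorem_Algebra"
begin

lemma order_lin_prod: "Polynomial.order (a::'a::idom) (\<Prod>x\<leftarrow>xs. [:-x,1:]) = length (filter ((=) a) xs)"
proof (induct xs)
  case (Cons x xs)
  have nz: "(\<Prod>x\<leftarrow>ys. [:-x,1:]) \<noteq> (0::'a poly)" for ys by (subst prod_list_zero_iff) auto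
  have "Polynomial.order a (\<Prod>x\<leftarrow>x#xs. [:-x,1:]) = Polynomial.order a [:-x,1:] + Polynomial.order a (\<Prod>x\<leftarrow>xs. [:-x,1:])"
    unfolding list.map prod_list.Cons by (rule order_mult, unfold mult_eq_0_iff, insert nz[of xs], auto)
  also have "Polynomial.order a [:-x,1:] = (if a = x then 1 else 0)"
    using order_power_n_n[of x 1] order_0I[of "[:-x,1:]" a] by auto
  finally show ?case using Cons by auto
qed simp

lemma kernel_nontriv: fixes A :: "'a::field mat" 
  assumes A: "A \<in> carrier_mat nr nc" and lt: "nr < nc" 
  shows "\<exists>v \<in> carrier_vec nc. v \<noteq> 0\<^sub>v nc \<and> A *\<^sub>v v = 0\<^sub>v nr"
proof -
  obtain C where gj: "gauss_jordan_single A = C" by auto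
  from gauss_jordan_single[OF A gj] obtain P Q where CPA: "C = P * A" and QP: "Q * P = 1\<^sub>m nr"
    and P: "P \<in> carrier_mat nr nr" and Q: "Q \<in> carrier_mat nr nr" and C: "C \<in> carrier_mat nr nc"
    and row: "row_echelon_form C" by auto
  note fb = find_base_vectors[OF row C]
  have "card {i. i < nr \<and> row C i \<noteq> 0\<^sub>v nc} \<le> card {..<nr}" by (rule card_mono) auto
  hence "card (set (find_base_vectors C)) > 0" using fb(4) lt by auto
  then obtain v where v: "v \<in> set (find_base_vectors C)" by (metis card.empty ex_in_conv less_irrefl)
  have "mat_kernel C = mat_kernel A" unfolding CPA by (rule mat_kernel_mult_eq[OF A P Q QP])
  with fb(1) v have "v \<in> mat_kernel A" by auto
  note k = mat_kernelD[OF A this]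
  have "v \<noteq> 0\<^sub>v nc" using fb(2) v by metis
  with k show ?thesis by blast
qed

lemma count_neg: fixes xs :: "real list"
  shows "(\<Sum>a\<in>{a::real. a < 0 \<and> poly (\<Prod>x\<leftarrow>xs. [:-x,1:]) a = 0}. Polynomial.order a (\<Prod>x\<leftarrow>xs. [:-x,1:]))
     = card {i. i < length xs \<and> xs ! i < 0}"
proof -
  have R: "{a::real. a < 0 \<and> poly (\<Prod>x\<leftarrow>xs. [:-x,1:]) a = 0} = {a \<in> set xs. a < 0}"
    by (auto simp: poly_prod_list prod_list_zero_iff)
  have "(\<Sum>a\<in>{a \<in> set xs. a < 0}. Polynomial.order a (\<Prod>x\<leftarrow>xs. [:-x,1:]))
     = (\<Sum>a\<in>{a \<in> set xs. a < 0}. card {i. i < length xs \<and> xs ! i = a})"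
    unfolding order_lin_prod length_filter_conv_card by (intro sum.cong refl) (auto intro!: arg_cong[where f=card])
  also have "\<dots> = card (\<Union>a\<in>{a \<in> set xs. a < 0}. {i. i < length xs \<and> xs ! i = a})"
    by (rule card_UN_disjoint[symmetric], auto)
  also have "(\<Union>a\<in>{a \<in> set xs. a < 0}. {i. i < length xs \<and> xs ! i = a}) = {i. i < length xs \<and> xs ! i < 0}"
    by auto
  finally show ?thesis unfolding R .
qed

lemma sym_quad: fixes A :: "'a::comm_ring_1 mat"
  assumes A: "A \<in> carrier_mat n n" and s: "transpose_mat A = A"
    and x: "x \<in> carrier_vec n" and y: "y \<in> carrier_vec n"
  shows "x \<bullet> (A *\<^sub>v y) = y \<bullet> (A *\<^sub>v x)"
proof -
  have "x \<bullet> (A *\<^sub>v y) = (transpose_mat A *\<^sub>v x) \<bullet> y"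
    using transpose_vec_mult_scalar[OF A y x] by simp
  also have "\<dots> = y \<bullet> (A *\<^sub>v x)" unfolding s
    by (rule comm_scalar_prod[of _ n], insert A x y, auto)
  finally show ?thesis .
qed

lemma real_eigen: fixes A :: "real mat"
  assumes A: "A \<in> carrier_mat n n" and s: "transpose_mat A = A" and n: "n > 0"
  shows "\<exists>e v. v \<in> carrier_vec n \<and> v \<noteq> 0\<^sub>v n \<and> A *\<^sub>v v = e \<cdot>\<^sub>v v"
proof -
  define Ac where "Ac = map_mat complex_of_real A"
  have Ac: "Ac \<in> carrier_mat n n" using A unfolding Ac_def by auto
  have "degree (char_poly Ac) = n" using degree_monic_char_poly[OF Ac] by auto
  hence "\<not> constant (poly (char_poly Ac))" using n constant_degree[of "char_poly Ac"] by auto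
  from fundamental_theorem_of_algebra[OF this] obtain z where "poly (char_poly Ac) z = 0" by auto
  hence "eigenvalue Ac z" using eigenvalue_root_char_poly[OF Ac] by auto
  then obtain v where ev: "eigenvector Ac v z" unfolding eigenvalue_def by auto
  hence v: "v \<in> carrier_vec n" and v0: "v \<noteq> 0\<^sub>v n" and Av: "Ac *\<^sub>v v = z \<cdot>\<^sub>v v"
    unfolding eigenvector_def using Ac by auto
  define x where "x = vec n (\<lambda>i. Re (v $ i))"
  define y where "y = vec n (\<lambda>i. Im (v $ i))"
  define a where "a = Re z"
  define b where "b = Im z"
  have x: "x \<in> carrier_vec n" and y: "y \<in> carrier_vec n" unfolding x_def y_def by auto
  have comp: "(\<Sum>j = 0..<n. complex_of_real (A $$ (i, j)) * v $ j) = z * v $ i" if i: "i < n" for i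
  proof -
    have "(Ac *\<^sub>v v) $ i = z * v $ i" using Av i v by auto
    moreover have "(Ac *\<^sub>v v) $ i = (\<Sum>j = 0..<n. complex_of_real (A $$ (i, j)) * v $ j)"
      using i Ac A v unfolding Ac_def by (auto simp: scalar_prod_def)
    ultimately show ?thesis by simp
  qed
  have hx: "(A *\<^sub>v x) $ i = a * x $ i - b * y $ i" if i: "i < n" for i
  proof -
    have "(A *\<^sub>v x) $ i = (\<Sum>j = 0..<n. A $$ (i, j) * Re (v $ j))"
      using i A unfolding x_def by (auto simp: scalar_prod_def)
    also have "\<dots> = Re (\<Sum>j = 0..<n. complex_of_real (A $$ (i, j)) * v $ j)"
      by (simp add: Re_sum)
    also have "\<dots> = Re (z * v $ i)" using comp[OF i] by simp
    finally show ?thesis using i unfolding x_def y_def a_def b_def by simp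
  qed
  have hy: "(A *\<^sub>v y) $ i = b * x $ i + a * y $ i" if i: "i < n" for i
  proof -
    have "(A *\<^sub>v y) $ i = (\<Sum>j = 0..<n. A $$ (i, j) * Im (v $ j))"
      using i A unfolding y_def by (auto simp: scalar_prod_def)
    also have "\<dots> = Im (\<Sum>j = 0..<n. complex_of_real (A $$ (i, j)) * v $ j)"
      by (simp add: Im_sum)
    also have "\<dots> = Im (z * v $ i)" using comp[OF i] by simp
    finally show ?thesis using i unfolding x_def y_def a_def b_def by simp
  qed
  have "x \<bullet> (A *\<^sub>v y) = y \<bullet> (A *\<^sub>v x)" by (rule sym_quad[OF A s x y])
  moreover have "x \<bullet> (A *\<^sub>v y) = (\<Sum>i = 0..<n. x $ i * (A *\<^sub>v y) $ i)"
    using A by (simp add: scalar_prod_def[of x] del: index_mult_mat_vec)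
  moreover have "y \<bullet> (A *\<^sub>v x) = (\<Sum>i = 0..<n. y $ i * (A *\<^sub>v x) $ i)"
    using A by (simp add: scalar_prod_def[of y] del: index_mult_mat_vec)
  moreover have "(\<Sum>i = 0..<n. x $ i * (A *\<^sub>v y) $ i) = (\<Sum>i = 0..<n. x $ i * (b * x $ i + a * y $ i))"
    by (rule sum.cong, simp_all add: hy del: index_mult_mat_vec)
  moreover have "(\<Sum>i = 0..<n. y $ i * (A *\<^sub>v x) $ i) = (\<Sum>i = 0..<n. y $ i * (a * x $ i - b * y $ i))"
    by (rule sum.cong, simp_all add: hx del: index_mult_mat_vec)
  ultimately have "(\<Sum>i = 0..<n. x $ i * (b * x $ i + a * y $ i)) = (\<Sum>i = 0..<n. y $ i * (a * x $ i - b * y $ i))"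
    by simp
  hence "(\<Sum>i = 0..<n. x $ i * (b * x $ i + a * y $ i) - y $ i * (a * x $ i - b * y $ i)) = 0"
    by (simp add: sum_subtractf)
  hence "(\<Sum>i = 0..<n. b * ((x $ i)\<^sup>2 + (y $ i)\<^sup>2)) = 0"
    by (simp add: algebra_simps power2_eq_square)
  hence b0: "b * (\<Sum>i = 0..<n. (x $ i)\<^sup>2 + (y $ i)\<^sup>2) = 0"
    by (metis sum_distrib_left)
  have "\<exists>i<n. v $ i \<noteq> 0"
  proof (rule ccontr)
    assume "\<not> ?thesis"
    hence "v = 0\<^sub>v n" using v by (intro eq_vecI) auto
    with v0 show False by simp
  qed
  then obtain i where i: "i < n" and vi: "v $ i \<noteq> 0" by auto
  have "x $ i \<noteq> 0 \<or> y $ i \<noteq> 0" using vi i unfolding x_def y_def by (auto simp: complex_eq_iff)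
  hence pos: "(x $ i)\<^sup>2 + (y $ i)\<^sup>2 > 0" by (auto simp: add_pos_nonneg add_nonneg_pos)
  have "(\<Sum>i = 0..<n. (x $ i)\<^sup>2 + (y $ i)\<^sup>2) \<ge> (x $ i)\<^sup>2 + (y $ i)\<^sup>2"
    by (rule member_le_sum, insert i, auto)
  with pos b0 have b: "b = 0" by auto
  have Ax: "A *\<^sub>v x = a \<cdot>\<^sub>v x" by (rule eq_vecI, insert hx b A x, auto)
  have Ay: "A *\<^sub>v y = a \<cdot>\<^sub>v y" by (rule eq_vecI, insert hy b A y, auto)
  show ?thesis
  proof (cases "x $ i = 0")
    case True
    with \<open>x $ i \<noteq> 0 \<or> y $ i \<noteq> 0\<close> have "y \<noteq> 0\<^sub>v n" using i by auto
    with Ay y show ?thesis by blast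
  next
    case False
    hence "x \<noteq> 0\<^sub>v n" using i by auto
    with Ax x show ?thesis by blast
  qed
qed

lemma real_conj_sprod: "(v::real vec) \<bullet>c w = v \<bullet> w"
proof -
  have "conjugate w = w" by (rule eq_vecI, auto)
  thus ?thesis by simp
qed

lemma self_sprod_nonneg: "(w::real vec) \<bullet> w \<ge> 0"
  unfolding scalar_prod_def by (rule sum_nonneg, auto)

lemma onb_exists: fixes u :: "real vec"
  assumes u: "u \<in> carrier_vec n" and u1: "u \<bullet> u = 1"
  shows "\<exists>W. W \<in> carrier_mat n n \<and> transpose_mat W * W = 1\<^sub>m n \<and> col W 0 = u"
proof -
  have u0: "u \<noteq> 0\<^sub>v n" using u1 by auto
  interpret cof_vec_space n "TYPE(real)" .
  define b where "b = basis_completion u"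
  note bc = basis_completion[OF u u0, folded b_def]
  have n0: "0 < n"
  proof (rule ccontr)
    assume "\<not> 0 < n"
    hence "u = 0\<^sub>v n" using u by (intro eq_vecI) auto
    with u0 show False by simp
  qed
  from bc(6) bc(7) n0 obtain vs where bv: "b = u # vs" 
    by (cases b, auto)
  define ws where "ws = gram_schmidt n b"
  note gs = gram_schmidt_result[OF bc(2) bc(4) bc(5) ws_def]
  have hdws: "hd ws = u" unfolding ws_def bv by (rule gram_schmidt_hd[OF u])
  have lws: "length ws = n" using gs(4) bc(6) by simp
  define c where "c = (\<lambda>w::real vec. 1 / sqrt (w \<bullet> w))"
  define ws' where "ws' = map (\<lambda>w. c w \<cdot>\<^sub>v w) ws"
  define W where "W = mat_of_cols n ws'"
  have lws': "length ws' = n" unfolding ws'_def using lws by simp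
  have wsc: "ws ! i \<in> carrier_vec n" if "i < n" for i using gs(3) lws that by auto
  have ws'c: "ws' ! i \<in> carrier_vec n" if "i < n" for i using wsc[OF that] lws that unfolding ws'_def by auto
  have W: "W \<in> carrier_mat n n" unfolding W_def using lws' by auto
  have colW: "col W i = ws' ! i" if "i < n" for i unfolding W_def 
    by (rule col_mat_of_cols, insert lws' ws'c that, auto)
  have orth: "ws ! i \<bullet> ws ! j = 0 \<longleftrightarrow> i \<noteq> j" if "i < n" "j < n" for i j
    using corthogonalD[OF gs(2), of i j] lws that by (simp add: real_conj_sprod)
  have "transpose_mat W * W = 1\<^sub>m n"
  proof (rule eq_matI)
    fix i j assume i: "i < dim_row (1\<^sub>m n)" and j: "j < dim_col (1\<^sub>m n)"
    hence i: "i < n" and j: "j < n" by auto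
    have "(transpose_mat W * W) $$ (i, j) = col W i \<bullet> col W j" using W i j by simp
    also have "\<dots> = ws' ! i \<bullet> ws' ! j" using colW i j by simp
    also have "\<dots> = c (ws ! i) * c (ws ! j) * (ws ! i \<bullet> ws ! j)" 
      unfolding ws'_def using i j lws wsc[OF i] wsc[OF j]
      by (simp add: smult_scalar_prod_distrib scalar_prod_smult_distrib)
    also have "\<dots> = 1\<^sub>m n $$ (i, j)"
    proof (cases "i = j")
      case True
      have "ws ! i \<bullet> ws ! i \<noteq> 0" using orth[OF i i] by simp
      hence pos: "ws ! i \<bullet> ws ! i > 0" using self_sprod_nonneg[of "ws ! i"] by linarith
      have "c (ws ! i) * c (ws ! i) = 1 / (ws ! i \<bullet> ws ! i)" unfolding c_def using pos
        by (simp add: real_sqrt_mult[symmetric])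
      thus ?thesis using True pos i by simp
    next
      case False
      thus ?thesis using orth[OF i j] i j by simp
    qed
    finally show "(transpose_mat W * W) $$ (i, j) = 1\<^sub>m n $$ (i, j)" .
  qed (insert W, auto)
  moreover have "col W 0 = u"
  proof -
    have "ws ! 0 = u" using hdws n0 lws by (cases ws, auto)
    hence "ws' ! 0 = c u \<cdot>\<^sub>v u" unfolding ws'_def using n0 lws by simp
    also have "c u = 1" unfolding c_def u1 by simp
    finally show ?thesis using colW[OF n0] by simp
  qed
  ultimately show ?thesis using W by blast
qed

lemma spectral: fixes A :: "real mat"
  assumes "A \<in> carrier_mat n n" and "transpose_mat A = A"
  shows "\<exists>P D. P \<in> carrier_mat n n \<and> D \<in> carrier_mat n n \<and> transpose_mat P * P = 1\<^sub>m n
     \<and> transpose_mat P * A * P = D \<and> diagonal_mat D"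
  using assms
proof (induct n arbitrary: A)
  case 0
  thus ?case by (intro exI[of _ "1\<^sub>m 0"] exI[of _ A], auto simp: diagonal_mat_def)
next
  case (Suc m A)
  define n where "n = Suc m"
  have A: "A \<in> carrier_mat n n" and s: "transpose_mat A = A" using Suc(2,3) n_def by auto
  from real_eigen[OF A s] obtain e v0 where v0: "v0 \<in> carrier_vec n" "v0 \<noteq> 0\<^sub>v n"
    and Av0: "A *\<^sub>v v0 = e \<cdot>\<^sub>v v0" unfolding n_def by auto
  have "\<exists>i<n. v0 $ i \<noteq> 0"
  proof (rule ccontr)
    assume "\<not> ?thesis"
    hence "v0 = 0\<^sub>v n" using v0 by (intro eq_vecI) auto
    with v0 show False by simp
  qed
  then obtain i where i: "i < n" and vi: "v0 $ i \<noteq> 0" by auto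
  have "(v0 $ i)\<^sup>2 \<le> (\<Sum>j\<in>{0..<n}. (v0 $ j)\<^sup>2)" by (rule member_le_sum, insert i, auto)
  moreover have "v0 \<bullet> v0 = (\<Sum>j\<in>{0..<n}. (v0 $ j)\<^sup>2)" using v0 by (simp add: scalar_prod_def power2_eq_square)
  ultimately have "v0 \<bullet> v0 \<ge> (v0 $ i)\<^sup>2" by simp
  hence pos: "v0 \<bullet> v0 > 0" using vi by (smt (verit) zero_less_power2)
  define u where "u = (1 / sqrt (v0 \<bullet> v0)) \<cdot>\<^sub>v v0"
  have u: "u \<in> carrier_vec n" unfolding u_def using v0 by auto
  have u1: "u \<bullet> u = 1" unfolding u_def using v0 pos
    by (simp add: smult_scalar_prod_distrib scalar_prod_smult_distrib real_sqrt_mult[symmetric])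
  have Au: "A *\<^sub>v u = e \<cdot>\<^sub>v u" unfolding u_def using mult_mat_vec[OF A v0(1)] Av0
    by (simp add: smult_smult_assoc mult.commute)
  from onb_exists[OF u u1] obtain W where W: "W \<in> carrier_mat n n" 
    and WW: "transpose_mat W * W = 1\<^sub>m n" and W0: "col W 0 = u" by auto
  have WT: "transpose_mat W \<in> carrier_mat n n" using W by auto
  define A' where "A' = transpose_mat W * A * W"
  have A': "A' \<in> carrier_mat n n" unfolding A'_def using W A by auto
  have sA': "transpose_mat A' = A'"
  proof -
    have "transpose_mat A' = transpose_mat W * transpose_mat (transpose_mat W * A)" 
      unfolding A'_def using transpose_mult[of "transpose_mat W * A" n n W n] W A by auto
    also have "transpose_mat (transpose_mat W * A) = transpose_mat A * W" 
      using transpose_mult[of "transpose_mat W" n n A n] W A by auto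
    finally show ?thesis unfolding A'_def s using W A by simp
  qed
  define e0 :: "real vec" where "e0 = unit_vec n 0"
  have n0: "0 < n" unfolding n_def by simp
  have We0: "W *\<^sub>v e0 = u" unfolding W0[symmetric] e0_def
    by (rule eq_vecI, insert W n0, auto)
  have "A' *\<^sub>v e0 = transpose_mat W *\<^sub>v (A *\<^sub>v (W *\<^sub>v e0))" unfolding A'_def
    using assoc_mult_mat_vec[of "transpose_mat W * A" n n W n e0] assoc_mult_mat_vec[OF WT A, of "W *\<^sub>v e0"] W A
    unfolding e0_def by auto
  also have "\<dots> = e \<cdot>\<^sub>v (transpose_mat W *\<^sub>v (W *\<^sub>v e0))" unfolding We0 Au using mult_mat_vec[OF WT u] by simp
  also have "transpose_mat W *\<^sub>v (W *\<^sub>v e0) = e0" 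
    using assoc_mult_mat_vec[OF WT W, of e0, symmetric] WW unfolding e0_def by simp
  finally have Ae0: "A' *\<^sub>v e0 = e \<cdot>\<^sub>v e0" .
  have col0: "A' $$ (i, 0) = (if i = 0 then e else 0)" if i: "i < n" for i
  proof -
    have "(A' *\<^sub>v e0) $ i = A' $$ (i, 0)" unfolding e0_def using A' i n0 by simp
    thus ?thesis unfolding Ae0 unfolding e0_def using i n0 by auto
  qed
  have symA': "A' $$ (i, j) = A' $$ (j, i)" if "i < n" "j < n" for i j
    using arg_cong[OF sA', of "\<lambda>M. M $$ (j, i)"] that A' by auto
  define A3 where "A3 = mat m m (\<lambda>(i,j). A' $$ (Suc i, Suc j))"
  have A3: "A3 \<in> carrier_mat m m" unfolding A3_def by auto
  have sA3: "transpose_mat A3 = A3" unfolding A3_def 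
    by (rule eq_matI, auto intro!: symA' simp: n_def)
  define e1 where "e1 = mat 1 1 (\<lambda>_. e)"
  have e1: "e1 \<in> carrier_mat 1 1" unfolding e1_def by auto
  have A'b: "A' = four_block_mat e1 (0\<^sub>m 1 m) (0\<^sub>m m 1) A3"
  proof (rule eq_matI)
    fix i j assume "i < dim_row (four_block_mat e1 (0\<^sub>m 1 m) (0\<^sub>m m 1) A3)" 
      "j < dim_col (four_block_mat e1 (0\<^sub>m 1 m) (0\<^sub>m m 1) A3)"
    hence i: "i < n" and j: "j < n" using e1 A3 unfolding n_def by auto
    show "A' $$ (i, j) = four_block_mat e1 (0\<^sub>m 1 m) (0\<^sub>m m 1) A3 $$ (i, j)"
    proof (cases "i = 0 \<or> j = 0")
      case True
      thus ?thesis using col0[OF i] col0[OF j] symA'[OF i j] i j e1 A3 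
        unfolding e1_def by (auto simp: n_def)
    next
      case False
      then obtain i' j' where "i = Suc i'" "j = Suc j'" by (cases i; cases j, auto)
      thus ?thesis using i j e1 A3 unfolding A3_def by (auto simp: n_def)
    qed
  qed (insert A' e1 A3, auto simp: n_def)
  from Suc(1)[OF A3 sA3] obtain P3 D3 where P3: "P3 \<in> carrier_mat m m" and D3: "D3 \<in> carrier_mat m m"
    and PP3: "transpose_mat P3 * P3 = 1\<^sub>m m" and PAP3: "transpose_mat P3 * A3 * P3 = D3"
    and dD3: "diagonal_mat D3" by auto
  have PT3: "transpose_mat P3 \<in> carrier_mat m m" using P3 by simp
  have A3': "transpose_mat P3 * A3 \<in> carrier_mat m m" using P3 A3 by simp
  define E where "E = four_block_mat (1\<^sub>m 1) (0\<^sub>m 1 m) (0\<^sub>m m 1) P3"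
  have E: "E \<in> carrier_mat n n" unfolding E_def n_def using P3 by auto
  have ET: "transpose_mat E = four_block_mat (1\<^sub>m 1) (0\<^sub>m 1 m) (0\<^sub>m m 1) (transpose_mat P3)"
    unfolding E_def by (subst transpose_four_block_mat, insert P3, auto)
  define P where "P = W * E"
  define D where "D = four_block_mat e1 (0\<^sub>m 1 m) (0\<^sub>m m 1) D3"
  have P: "P \<in> carrier_mat n n" unfolding P_def using W E by auto
  have D: "D \<in> carrier_mat n n" unfolding D_def n_def using e1 D3 by auto
  have PT: "transpose_mat P = transpose_mat E * transpose_mat W" unfolding P_def
    by (rule transpose_mult[OF W E])
  have "transpose_mat P * P = transpose_mat E * (transpose_mat W * W) * E"
    unfolding PT unfolding P_def using W E WT by (simp add: assoc_mult_mat[of _ n n _ n _ n])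
  also have "\<dots> = transpose_mat E * E" unfolding WW using E by simp
  also have "\<dots> = four_block_mat (1\<^sub>m 1) (0\<^sub>m 1 m) (0\<^sub>m m 1) (transpose_mat P3 * P3)"
    unfolding ET unfolding E_def
    by (subst mult_four_block_mat[OF one_carrier_mat zero_carrier_mat zero_carrier_mat PT3 
        one_carrier_mat zero_carrier_mat zero_carrier_mat P3], insert P3, auto)
  also have "\<dots> = 1\<^sub>m n" unfolding PP3 n_def by simp
  finally have PP: "transpose_mat P * P = 1\<^sub>m n" .
  have "transpose_mat P * A * P = transpose_mat E * A' * E"
    unfolding PT unfolding P_def A'_def using W E A WT by (simp add: assoc_mult_mat[of _ n n _ n _ n])
  also have "\<dots> = D"
    unfolding ET A'b unfolding E_def D_def
    apply (subst mult_four_block_mat[OF one_carrier_mat zero_carrier_mat zero_carrier_mat PT3 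
        e1 zero_carrier_mat zero_carrier_mat A3], insert P3 e1 A3 PT3, simp)
    apply (subst mult_four_block_mat[OF e1[simplified] zero_carrier_mat zero_carrier_mat A3'
        one_carrier_mat[of "Suc 0"] zero_carrier_mat zero_carrier_mat P3], insert P3 e1 A3 PT3, simp)
    apply (insert P3 e1 A3 PT3, simp add: PAP3[symmetric] assoc_mult_mat[of _ m m _ m _ m])
    done
  finally have PAP: "transpose_mat P * A * P = D" .
  have dD: "diagonal_mat D" unfolding D_def diagonal_mat_def using dD3 e1 D3
    by (auto simp: diagonal_mat_def)
  show ?case using P D PP PAP dD unfolding n_def by blast
qed

lemma pick_lessThan: "i < k \<Longrightarrow> pick {..<k} i = i"
proof -
  assume i: "i < k"
  have "card {a\<in>{..<k}. a < i} = i"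
  proof -
    have "{a\<in>{..<k}. a < i} = {..<i}" using i by auto
    thus ?thesis by simp
  qed
  with pick_card_in_set[of i "{..<k}"] i show ?thesis by simp
qed

theorem proposition2:
  fixes n k :: nat and A :: "real mat"
  assumes "2 \<le> k" and "k \<le> n"
    and "A \<in> k_psd_closure n k"
  shows "num_neg_eigenvalues A \<le> n - k"
proof -
  from assms(3) have A: "A \<in> carrier_mat n n" and s: "transpose_mat A = A" 
    and psdI: "\<And>I. I \<subseteq> {..<n} \<Longrightarrow> card I = k \<Longrightarrow> psd (submatrix A I I)"
    unfolding k_psd_closure_def by auto
  from spectral[OF A s] obtain P D where P: "P \<in> carrier_mat n n" and D: "D \<in> carrier_mat n n"
    and PP: "transpose_mat P * P = 1\<^sub>m n" and PAP: "transpose_mat P * A * P = D" 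
    and dD: "diagonal_mat D" by auto
  have PT: "transpose_mat P \<in> carrier_mat n n" using P by simp
  have PPT: "P * transpose_mat P = 1\<^sub>m n" by (rule mat_mult_left_right_inverse[OF PT P PP])
  have "P * D * transpose_mat P = (P * transpose_mat P) * A * (P * transpose_mat P)"
    unfolding PAP[symmetric] using P PT A by (simp add: assoc_mult_mat[of _ n n _ n _ n])
  also have "\<dots> = A" unfolding PPT using A by simp
  finally have APD: "A = P * D * transpose_mat P" by simp
  have "similar_mat_wit A D P (transpose_mat P)" unfolding similar_mat_wit_def Let_def
    using A D P PT PP PPT APD by auto
  hence "similar_mat A D" unfolding similar_mat_def by blast
  hence cpA: "char_poly A = char_poly D" by (rule char_poly_similar)
  have "upper_triangular D" using dD D unfolding diagonal_mat_def upper_triangular_def by auto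
  from char_poly_upper_triangular[OF D this] cpA
  have cp: "char_poly A = (\<Prod>a\<leftarrow>diag_mat D. [:-a, 1:])" by simp
  define S where "S = {i. i < n \<and> D $$ (i,i) < 0}"
  have numS: "num_neg_eigenvalues A = card S" unfolding num_neg_eigenvalues_def cp count_neg
    S_def diag_mat_def using D by (simp, intro arg_cong[where f = card], auto)
  have Sn: "S \<subseteq> {..<n}" unfolding S_def by auto
  show ?thesis unfolding numS
  proof (rule ccontr)
    assume "\<not> card S \<le> n - k"
    hence big: "card S > n - k" by simp
    define rs where "rs = map (row P) [k..<n] @ map (unit_vec n) (filter (\<lambda>i. i \<notin> S) [0..<n])"
    have "length (filter (\<lambda>i. i \<notin> S) [0..<n]) = card ({..<n} - S)"
      unfolding length_filter_conv_card by (rule arg_cong[where f = card], auto)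
    also have "\<dots> = n - card S" using Sn by (simp add: card_Diff_subset finite_subset)
    finally have "length rs = (n - k) + (n - card S)" unfolding rs_def by simp
    moreover have "card S \<le> n" using card_mono[OF _ Sn] by simp
    ultimately have lrs: "length rs < n" using big assms(2) by linarith
    define M where "M = mat_of_rows n rs"
    have M: "M \<in> carrier_mat (length rs) n" unfolding M_def by simp
    from kernel_nontriv[OF M lrs] obtain w where w: "w \<in> carrier_vec n" and w0: "w \<noteq> 0\<^sub>v n"
      and Mw: "M *\<^sub>v w = 0\<^sub>v (length rs)" by auto
    have rsc: "set rs \<subseteq> carrier_vec n" unfolding rs_def using P by auto
    have zr: "r \<bullet> w = 0" if r: "r \<in> set rs" for r
    proof -
      from r obtain j where j: "j < length rs" and rj: "r = rs ! j" by (auto simp: in_set_conv_nth)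
      have "(M *\<^sub>v w) $ j = row M j \<bullet> w" using j M by simp
      also have "row M j = r" unfolding M_def rj by (rule mat_of_rows_row[OF j], insert rsc j, auto)
      finally show ?thesis using Mw j by simp
    qed
    have wS: "w $ i = 0" if "i < n" "i \<notin> S" for i
    proof -
      have "unit_vec n i \<in> set rs" unfolding rs_def using that by auto
      from zr[OF this] show ?thesis using w that by simp
    qed
    define v where "v = P *\<^sub>v w"
    have v: "v \<in> carrier_vec n" unfolding v_def by (rule mult_mat_vec_carrier[OF P w])
    have vk: "v $ j = 0" if "k \<le> j" "j < n" for j
    proof -
      have "row P j \<in> set rs" unfolding rs_def using that by auto
      from zr[OF this] show ?thesis unfolding v_def using that P by simp
    qed
    have Dw: "(D *\<^sub>v w) $ i = D $$ (i,i) * w $ i" if i: "i < n" for i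
    proof -
      have "(D *\<^sub>v w) $ i = (\<Sum>j\<in>{0..<n}. D $$ (i,j) * w $ j)"
        using i D w by (simp add: scalar_prod_def)
      also have "\<dots> = (\<Sum>j\<in>{0..<n}. if j = i then D $$ (i,i) * w $ i else 0)"
        by (rule sum.cong, insert dD D i, auto simp: diagonal_mat_def)
      also have "\<dots> = D $$ (i,i) * w $ i" using i by simp
      finally show ?thesis .
    qed
    have "v \<bullet> (A *\<^sub>v v) = (A *\<^sub>v v) \<bullet> v" by (rule comm_scalar_prod[of _ n], insert A v, auto)
    also have "\<dots> = (transpose_mat P *\<^sub>v (A *\<^sub>v v)) \<bullet> w"
      unfolding v_def by (rule transpose_vec_mult_scalar[OF P w, symmetric], insert A P w, auto)
    also have "transpose_mat P *\<^sub>v (A *\<^sub>v v) = D *\<^sub>v w"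
      unfolding v_def PAP[symmetric] using P PT A w 
      by (simp add: assoc_mult_mat_vec[of _ n n _ n w])
    also have "(D *\<^sub>v w) \<bullet> w = (\<Sum>i\<in>{0..<n}. D $$ (i,i) * w $ i * w $ i)"
      unfolding scalar_prod_def using w Dw by (intro sum.cong) auto
    finally have quadv: "v \<bullet> (A *\<^sub>v v) = (\<Sum>i\<in>{0..<n}. D $$ (i,i) * w $ i * w $ i)" .
    have "\<exists>i<n. w $ i \<noteq> 0"
    proof (rule ccontr)
      assume "\<not> ?thesis"
      hence "w = 0\<^sub>v n" using w by (intro eq_vecI) auto
      with w0 show False by simp
    qed
    then obtain i0 where i0: "i0 < n" and wi0: "w $ i0 \<noteq> 0" by auto
    have i0S: "i0 \<in> S" using wS[OF i0] wi0 by auto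
    define f where "f = (\<lambda>i. D $$ (i,i) * w $ i * w $ i)"
    have fle: "f i \<le> 0" if "i \<in> {0..<n}" for i
    proof (cases "i \<in> S")
      case True
      hence "D $$ (i,i) < 0" unfolding S_def by auto
      thus ?thesis unfolding f_def by (simp add: mult.assoc mult_nonpos_nonneg)
    next
      case False
      thus ?thesis using wS[of i] that unfolding f_def by auto
    qed
    have sq: "w $ i0 * w $ i0 > 0" using wi0 
      by (cases "w $ i0 > 0") (auto simp: mult_pos_pos mult_neg_neg)
    have fi0: "f i0 < 0" using i0S sq unfolding f_def S_def
      by (simp add: mult.assoc mult_neg_pos)
    have "sum f {0..<n} = f i0 + sum f ({0..<n} - {i0})" 
      by (rule sum.remove, insert i0, auto)
    also have "sum f ({0..<n} - {i0}) \<le> 0" by (rule sum_nonpos, insert fle, auto)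
    finally have neg: "v \<bullet> (A *\<^sub>v v) < 0" unfolding quadv f_def[symmetric] using fi0 by linarith
    define B where "B = submatrix A {..<k} {..<k}"
    have "psd B" unfolding B_def by (rule psdI, insert assms(2), auto)
    have setk: "{i. i < n \<and> i \<in> {..<k}} = {..<k}" using assms(2) by auto
    have dB: "dim_row B = k" "dim_col B = k" unfolding B_def submatrix_def using A setk by auto
    have Bij: "B $$ (i,j) = A $$ (i,j)" if "i < k" "j < k" for i j
      unfolding B_def using submatrix_index[of i A "{..<k}" j "{..<k}"] that A setk
      by (simp add: pick_lessThan)
    define x where "x = vec k (\<lambda>i. v $ i)"
    have x: "x \<in> carrier_vec (dim_row B)" unfolding x_def dB by simp
    from \<open>psd B\<close> x have "x \<bullet> (B *\<^sub>v x) \<ge> 0" unfolding psd_def by auto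
    also have "x \<bullet> (B *\<^sub>v x) = (\<Sum>i\<in>{0..<k}. v $ i * (\<Sum>j\<in>{0..<k}. A $$ (i,j) * v $ j))"
      unfolding x_def using dB Bij by (auto simp: scalar_prod_def intro!: sum.cong)
    also have "\<dots> = (\<Sum>i\<in>{0..<n}. v $ i * (\<Sum>j\<in>{0..<n}. A $$ (i,j) * v $ j))"
    proof -
      have inner: "(\<Sum>j\<in>{0..<n}. A $$ (i,j) * v $ j) = (\<Sum>j\<in>{0..<k}. A $$ (i,j) * v $ j)" for i
        by (rule sum.mono_neutral_right, insert vk assms(2), auto)
      show ?thesis unfolding inner
        by (rule sum.mono_neutral_right[symmetric], insert vk assms(2), auto)
    qed
    also have "\<dots> = v \<bullet> (A *\<^sub>v v)" using A v by (auto simp: scalar_prod_def intro!: sum.cong)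
    finally show False using neg by simp
  qed
qed

end
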